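(* Let $v=(1/N,\dots,1/N)$ be the center of $\Delta$. Then $v$ is a linearly stable equilibrium if $\alpha<(N-1)/(N-2)$, and a linearly unstable equilibrium if $\alpha>(N-1)/(N-2)$.
   Context: Let $N\ge3$, $\alpha>1$, and $A_{i,j}=1-\delta_{i,j}$ for $i,j\le N$. Let $\Delta=\{v\in\mathbb R_+^N:\sum_iv_i=1,\ v_i\le3/4\ \forall i\}$. For $v$ with nonnegative coordinates let $v^\alpha=(v_i^\alpha)_i$, $H(v)=\sum_{i\neq j}v_i^\alpha v_j^\alpha$, $\pi_i(v)=v_i^\alpha(Av^\alpha)_i/H(v)$, and on $\Delta$ let $F(v)=-v+\pi(v)$. An equilibrium is $v\in\Delta$ with $F(v)=0$. With $DF(v)$ the differential at $v$ of $v\mapsto-v+\pi(v)$ acting on $\{x:\sum_ix_i=0\}$, an equilibrium is linearly stable if all eigenvalues of $DF(v)$ have negative real parts and linearly unstable if some eigenvalue has positive real part. *)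

theory Defs
  imports "HOL-Analysis.Analysis"
begin

text \<open>Vectors in R^N are modelled as real^'n with N = CARD('n).\<close>

definition Amat :: "real^'n^'n" where
  "Amat = (\<chi> i j. if i = j then 0 else 1)"

definition vpow :: "real \<Rightarrow> real^'n \<Rightarrow> real^'n" where
  "vpow \<alpha> v = (\<chi> i. v$i powr \<alpha>)"

definition Hf :: "real \<Rightarrow> real^'n \<Rightarrow> real" where
  "Hf \<alpha> v = (\<Sum>i\<in>UNIV. \<Sum>j\<in>UNIV - {i}. (v$i powr \<alpha>) * (v$j powr \<alpha>))"

definition piF :: "real \<Rightarrow> real^'n \<Rightarrow> real^'n" where
  "piF \<alpha> v = (\<chi> i. (v$i powr \<alpha>) * (Amat *v vpow \<alpha> v)$i / Hf \<alpha> v)"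

definition Fv :: "real \<Rightarrow> real^'n \<Rightarrow> real^'n" where
  "Fv \<alpha> v = - v + piF \<alpha> v"

definition Simplex :: "(real^'n) set" where
  "Simplex = {v. (\<forall>i. 0 \<le> v$i \<and> v$i \<le> 3/4) \<and> (\<Sum>i\<in>UNIV. v$i) = 1}"

definition equilibrium :: "real \<Rightarrow> real^'n \<Rightarrow> bool" where
  "equilibrium \<alpha> v \<longleftrightarrow> v \<in> Simplex \<and> Fv \<alpha> v = 0"

definition sumzero :: "(real^'n) set" where
  "sumzero = {x. (\<Sum>i\<in>UNIV. x$i) = 0}"

text \<open>Complex eigenvalue of a real linear map L acting on a subspace W:
  there is a nonzero complex eigenvector x + i y with x, y in W, i.e.
  L(x + i y) = \<mu> (x + i y) for the complexification of L.\<close>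
definition eigenvalue_on :: "(real^'n \<Rightarrow> real^'n) \<Rightarrow> (real^'n) set \<Rightarrow> complex \<Rightarrow> bool" where
  "eigenvalue_on L W \<mu> \<longleftrightarrow>
     (\<exists>x\<in>W. \<exists>y\<in>W. (x \<noteq> 0 \<or> y \<noteq> 0) \<and>
        L x = Re \<mu> *\<^sub>R x - Im \<mu> *\<^sub>R y \<and> L y = Im \<mu> *\<^sub>R x + Re \<mu> *\<^sub>R y)"

definition linearly_stable :: "real \<Rightarrow> real^'n \<Rightarrow> bool" where
  "linearly_stable \<alpha> v \<longleftrightarrow> equilibrium \<alpha> v \<and>
     (\<exists>D. (Fv \<alpha> has_derivative D) (at v) \<and>
          (\<forall>\<mu>. eigenvalue_on D sumzero \<mu> \<longrightarrow> Re \<mu> < 0))"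

definition linearly_unstable :: "real \<Rightarrow> real^'n \<Rightarrow> bool" where
  "linearly_unstable \<alpha> v \<longleftrightarrow> equilibrium \<alpha> v \<and>
     (\<exists>D. (Fv \<alpha> has_derivative D) (at v) \<and>
          (\<exists>\<mu>. eigenvalue_on D sumzero \<mu> \<and> Re \<mu> > 0))"

end

theory Submission
  imports Defs
begin

lemma vn_der: "((\<lambda>x::real^'n. x$i) has_derivative (\<lambda>h. h$i)) F"
  by (rule bounded_linear_imp_has_derivative) (rule bounded_linear_vec_nth)

lemma comp_der:
  fixes f :: "real^'m \<Rightarrow> real^'n"
  assumes d: "\<And>i. ((\<lambda>v. f v $ i) has_derivative (\<lambda>h. D h $ i)) (at x)"
  shows "(f has_derivative D) (at x)"
proof (rule has_derivative_componentwise_within[THEN iffD2], rule ballI)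
  fix b :: "real^'n" assume "b \<in> Basis"
  then obtain k where b: "b = axis k (1::real)" unfolding Basis_vec_def by auto
  have e1: "(\<lambda>v. f v \<bullet> b) = (\<lambda>v. f v $ k)" unfolding b inner_axis by simp
  have e2: "(\<lambda>v. D v \<bullet> b) = (\<lambda>v. D v $ k)" unfolding b inner_axis by simp
  show "((\<lambda>v. f v \<bullet> b) has_derivative (\<lambda>v. D v \<bullet> b)) (at x)"
    unfolding e1 e2 by (rule d)
qed

lemma pw_der:
  assumes "0 < (v::real^'n)$j"
  shows "((\<lambda>v. v$j powr a) has_derivative (\<lambda>h. a * v$j powr (a-1) * h$j)) (at v)"
proof -
  have "((\<lambda>v. v$j powr a) has_derivative (\<lambda>h. v$j powr a * ((\<lambda>h. 0) h * ln (v$j) + h$j * a / v$j))) (at v)"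
    by (rule has_derivative_powr[OF vn_der has_derivative_const assms]) simp
  moreover have "(\<lambda>h. v$j powr a * ((\<lambda>h. 0) h * ln (v$j) + h$j * a / v$j)) = (\<lambda>h. a * v$j powr (a-1) * h$j)"
    using assms by (auto simp: powr_diff field_simps)
  ultimately show ?thesis by simp
qed

lemma Amat_comp: "(Amat *v w) $ i = (\<Sum>j\<in>UNIV-{i}. w$j)"
proof -
  have "(Amat *v w) $ i = (\<Sum>j\<in>UNIV. (if i = j then 0 else 1) * w$j)"
    unfolding Amat_def matrix_vector_mult_def by simp
  also have "\<dots> = (\<Sum>j\<in>UNIV-{i}. (if i = j then 0 else 1) * w$j)"
    by (rule sum.mono_neutral_right) auto
  also have "\<dots> = (\<Sum>j\<in>UNIV-{i}. w$j)"
    by (rule sum.cong) auto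
  finally show ?thesis .
qed

lemma Fv_comp: "Fv a v $ i = - v$i + v$i powr a * (\<Sum>j\<in>UNIV-{i}. v$j powr a) / Hf a v"
  unfolding Fv_def piF_def by (simp add: Amat_comp vpow_def)

definition "dp a (v::real^'n) j h = a * v$j powr (a-1) * h$j"
definition "Sf a (v::real^'n) i = (\<Sum>j\<in>UNIV-{i}. v$j powr a)"
definition "dS a (v::real^'n) i h = (\<Sum>j\<in>UNIV-{i}. dp a v j h)"
definition "dH a (v::real^'n) h = (\<Sum>i\<in>UNIV. \<Sum>j\<in>UNIV-{i}. v$i powr a * dp a v j h + dp a v i h * v$j powr a)"
definition "DF a (v::real^'n) = (\<lambda>h. \<chi> i. - h$i + ((v$i powr a * dS a v i h + dp a v i h * Sf a v i) * Hf a v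
     - (v$i powr a * Sf a v i) * dH a v h) / (Hf a v * Hf a v))"

lemma F_der:
  fixes v :: "real^'n"
  assumes pos: "\<And>j. 0 < v$j" and H0: "Hf a v \<noteq> 0"
  shows "(Fv a has_derivative DF a v) (at v)"
proof (rule comp_der)
  fix i
  have p: "\<And>j. ((\<lambda>v. v$j powr a) has_derivative dp a v j) (at v)"
    unfolding dp_def[abs_def] by (rule pw_der[OF pos])
  have S: "\<And>i. ((\<lambda>v. Sf a v i) has_derivative dS a v i) (at v)"
    unfolding Sf_def[abs_def] dS_def[abs_def] by (intro has_derivative_sum p)
  have H: "((\<lambda>v. Hf a v) has_derivative dH a v) (at v)"
    unfolding Hf_def[abs_def] dH_def[abs_def] by (intro has_derivative_sum has_derivative_mult p)
  have "((\<lambda>v. - v$i + (v$i powr a * Sf a v i) / Hf a v) has_derivative (\<lambda>h. DF a v h $ i)) (at v)"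
    unfolding DF_def vec_lambda_beta
    by (intro has_derivative_add has_derivative_minus vn_der has_derivative_divide' has_derivative_mult p S H H0)
  moreover have "(\<lambda>v. - v$i + (v$i powr a * Sf a v i) / Hf a v) = (\<lambda>v. Fv a v $ i)"
    by (simp add: Fv_comp Sf_def)
  ultimately show "((\<lambda>v. Fv a v $ i) has_derivative (\<lambda>h. DF a v h $ i)) (at v)" by (simp only:)
qed

lemma eig_re:
  assumes "\<forall>x\<in>W. D x = lam *\<^sub>R x" and "eigenvalue_on D W \<mu>"
  shows "Re \<mu> = lam"
proof -
  obtain x y where xy: "x \<in> W" "y \<in> W" "x \<noteq> 0 \<or> y \<noteq> 0"
    "D x = Re \<mu> *\<^sub>R x - Im \<mu> *\<^sub>R y" "D y = Im \<mu> *\<^sub>R x + Re \<mu> *\<^sub>R y"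
    using assms(2) unfolding eigenvalue_on_def by blast
  define d where "d = lam - Re \<mu>"
  define b where "b = Im \<mu>"
  have e1: "d *\<^sub>R x = - (b *\<^sub>R y)" using xy assms(1) by (simp add: d_def b_def algebra_simps)
  have e2: "d *\<^sub>R y = b *\<^sub>R x" using xy assms(1) by (simp add: d_def b_def algebra_simps)
  have "(d*d + b*b) *\<^sub>R x = 0"
  proof -
    have "(d*d) *\<^sub>R x = d *\<^sub>R (d *\<^sub>R x)" by simp
    also have "\<dots> = - (b *\<^sub>R (d *\<^sub>R y))" using e1 by (simp add: scaleR_right.minus algebra_simps)
    also have "\<dots> = - ((b*b) *\<^sub>R x)" using e2 by simp
    finally show ?thesis by (simp add: algebra_simps)
  qed
  moreover have "(d*d + b*b) *\<^sub>R y = 0"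
  proof -
    have "(d*d) *\<^sub>R y = d *\<^sub>R (d *\<^sub>R y)" by simp
    also have "\<dots> = b *\<^sub>R (d *\<^sub>R x)" using e2 by (simp add: algebra_simps)
    also have "\<dots> = - ((b*b) *\<^sub>R y)" using e1 by simp
    finally show ?thesis by (simp add: algebra_simps)
  qed
  ultimately have "d*d + b*b = 0" using xy(3) by auto
  then have "d = 0" by (smt (verit) mult_nonneg_nonneg mult_pos_pos mult_neg_neg)
  then show ?thesis by (simp add: d_def)
qed

lemma eig_ex:
  assumes "\<forall>x\<in>W. D x = lam *\<^sub>R x" and "x \<in> W" "x \<noteq> 0" "0 \<in> W"
  shows "eigenvalue_on D W (complex_of_real lam)"
  unfolding eigenvalue_on_def
  using assms by (intro bexI[of _ x] bexI[of _ 0]) auto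

lemma sumzero_ex:
  assumes "CARD('n) \<ge> 2"
  shows "\<exists>x::real^'n. x \<in> sumzero \<and> x \<noteq> 0"
proof -
  obtain i :: 'n where True by simp
  have "card (UNIV - {i}) \<ge> 1" using assms by (simp add: card_Diff_singleton)
  then obtain j where j: "j \<in> UNIV - {i}" by (metis card.empty ex_in_conv not_one_le_zero)
  define x :: "real^'n" where "x = (\<chi> k. (if k = i then 1 else 0) - (if k = j then 1 else 0))"
  have "x $ i = 1" using j by (simp add: x_def)
  moreover have "(\<Sum>k\<in>UNIV. x$k) = 0" by (simp add: x_def sum_subtractf)
  ultimately show ?thesis unfolding sumzero_def by (intro exI[of _ x]) auto
qed

lemma card_rest: "real (card (UNIV - {i::'n::finite})) = real CARD('n) - 1"
proof -
  have "CARD('n) \<ge> 1" by (simp add: Suc_leI)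
  then show ?thesis by (simp add: card_Diff_singleton of_nat_diff)
qed

lemma sum_rest: "(\<Sum>j\<in>UNIV-{i}. f j) = (\<Sum>j\<in>UNIV. f j) - (f (i::'a::finite) :: real)"
  by (simp add: sum_diff1)

lemma center:
  fixes c :: "real^'n" and a :: real
  assumes N3: "CARD('n) \<ge> 3" and c: "c = (\<chi> i. 1 / real CARD('n))"
  defines "n \<equiv> real CARD('n)"
  shows "equilibrium a c" "Hf a c \<noteq> 0" "\<And>j. 0 < c$j"
    "\<forall>x\<in>sumzero. DF a c x = (a * (n - 2) / (n - 1) - 1) *\<^sub>R x"
proof -
  have n3: "n \<ge> 3" using N3 unfolding n_def by simp
  define u where "u = 1 / n"
  have u: "u > 0" using n3 by (simp add: u_def)
  have cj: "\<And>j. c$j = u" by (simp add: c u_def n_def)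
  show "\<And>j. 0 < c$j" using cj u by simp
  define q where "q = u powr a"
  have q: "q > 0" using u by (simp add: q_def)
  have Sf: "\<And>i. Sf a c i = (n - 1) * q"
    by (simp add: Sf_def cj q_def card_rest n_def)
  have Hc: "Hf a c = n * ((n - 1) * (q * q))"
    by (simp add: Hf_def cj q_def card_rest n_def)
  show H0: "Hf a c \<noteq> 0" using Hc n3 q by simp
  have Fc: "Fv a c = 0"
  proof -
    have "\<And>i. Fv a c $ i = 0"
    proof -
      fix i
      have "Fv a c $ i = - u + q * Sf a c i / Hf a c" by (simp add: Fv_comp cj q_def Sf_def)
      also have "\<dots> = 0" using n3 q by (simp add: Sf Hc u_def field_simps)
      finally show "Fv a c $ i = 0" .
    qed
    then show ?thesis by (simp add: vec_eq_iff)
  qed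
  have u34: "u \<le> 3/4" using n3 by (simp add: u_def field_simps)
  have "c \<in> Simplex"
    using n3 u u34 by (simp add: Simplex_def cj u_def n_def[symmetric])
  then show "equilibrium a c" by (simp add: equilibrium_def Fc)
  define r where "r = a * u powr (a - 1)"
  have rq: "r = a * n * q" using u by (simp add: r_def q_def powr_diff u_def)
  show "\<forall>x\<in>sumzero. DF a c x = (a * (n - 2) / (n - 1) - 1) *\<^sub>R x"
  proof
    fix h :: "real^'n" assume "h \<in> sumzero"
    then have hs: "(\<Sum>i\<in>UNIV. h$i) = 0" by (simp add: sumzero_def)
    have dp: "\<And>j. dp a c j h = r * h$j" by (simp add: dp_def cj r_def)
    have dS: "\<And>i. dS a c i h = - r * h$i"
      by (simp add: dS_def dp sum_rest sum_distrib_left[symmetric] hs)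
    have "dH a c h = (\<Sum>i\<in>UNIV. \<Sum>j\<in>UNIV-{i}. q * r * h$j + r * q * h$i)"
      by (simp add: dH_def dp cj q_def algebra_simps)
    also have "\<dots> = (\<Sum>i\<in>UNIV. q * r * (- h$i) + (n - 1) * (r * q * h$i))"
      by (simp add: sum.distrib sum_distrib_left[symmetric] sum_rest hs card_rest n_def)
    also have "\<dots> = (\<Sum>i\<in>UNIV. (q * r * (n - 2)) * h$i)"
      by (rule sum.cong) (simp_all add: algebra_simps)
    also have "\<dots> = (q * r * (n - 2)) * (\<Sum>i\<in>UNIV. h$i)"
      by (simp add: sum_distrib_left)
    finally have dH: "dH a c h = 0" using hs by simp
    show "DF a c h = (a * (n - 2) / (n - 1) - 1) *\<^sub>R h"
    proof (subst vec_eq_iff, intro allI)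
      fix i
      have "DF a c h $ i = - h$i + ((q * (- r * h$i) + r * h$i * ((n - 1) * q)) * Hf a c) / (Hf a c * Hf a c)"
        by (simp add: DF_def dS dp Sf dH cj q_def)
      also have "(q * (- r * h$i) + r * h$i * ((n - 1) * q)) = (a * (n - 2) / (n - 1) * h$i) * Hf a c"
      proof -
        have n1: "n - 1 \<noteq> 0" using n3 by simp
        have "(a * (n - 2) / (n - 1) * h$i) * Hf a c = a * (n - 2) * h$i * n * (q * q)"
          using n1 by (simp add: Hc)
        also have "\<dots> = q * (- r * h$i) + r * h$i * ((n - 1) * q)"
          by (simp add: rq algebra_simps)
        finally show ?thesis by simp
      qed
      also have "- h$i + ((a * (n - 2) / (n - 1) * h$i) * Hf a c * Hf a c) / (Hf a c * Hf a c) = (a * (n - 2) / (n - 1) - 1) * h$i"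
      proof -
        have cancel: "\<And>X. X * Hf a c * Hf a c / (Hf a c * Hf a c) = X" using H0 by (simp add: field_simps)
        show ?thesis by (simp only: cancel) (simp add: algebra_simps)
      qed
      finally show "DF a c h $ i = ((a * (n - 2) / (n - 1) - 1) *\<^sub>R h) $ i" by simp
    qed
  qed
qed

theorem lemma4p1:
  fixes \<alpha> :: real and c :: "real^'n"
  assumes "CARD('n) \<ge> 3" and "\<alpha> > 1"
    and "c = (\<chi> i. 1 / real CARD('n))"
  shows "(\<alpha> < (real CARD('n) - 1) / (real CARD('n) - 2) \<longrightarrow> linearly_stable \<alpha> c) \<and>
         (\<alpha> > (real CARD('n) - 1) / (real CARD('n) - 2) \<longrightarrow> linearly_unstable \<alpha> c)"
proof -
  define n where "n = real CARD('n)"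
  have n3: "n \<ge> 3" using assms(1) by (simp add: n_def)
  have C1: "equilibrium \<alpha> c" by (rule center(1)[OF assms(1) assms(3)])
  have C2: "Hf \<alpha> c \<noteq> 0" by (rule center(2)[OF assms(1) assms(3)])
  have C3: "\<And>j. 0 < c$j" by (rule center(3)[OF assms(1) assms(3)])
  have D: "(Fv \<alpha> has_derivative DF \<alpha> c) (at c)" by (rule F_der[OF C3 C2])
  define lam where "lam = \<alpha> * (n - 2) / (n - 1) - 1"
  have E: "\<forall>x\<in>sumzero. DF \<alpha> c x = lam *\<^sub>R x" using center(4)[OF assms(1) assms(3)] by (simp add: lam_def n_def)
  have "\<alpha> < (n - 1) / (n - 2) \<longrightarrow> linearly_stable \<alpha> c"
  proof
    assume "\<alpha> < (n - 1) / (n - 2)"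
    then have "\<alpha> * (n - 2) < n - 1" using n3 by (simp add: field_simps)
    then have "lam < 0" using n3 by (simp add: lam_def field_simps)
    then show "linearly_stable \<alpha> c"
      unfolding linearly_stable_def using C1 D eig_re[OF E] by auto
  qed
  moreover have "\<alpha> > (n - 1) / (n - 2) \<longrightarrow> linearly_unstable \<alpha> c"
  proof
    assume "\<alpha> > (n - 1) / (n - 2)"
    then have "\<alpha> * (n - 2) > n - 1" using n3 by (simp add: field_simps)
    then have "lam > 0" using n3 by (simp add: lam_def field_simps)
    moreover obtain x :: "real^'n" where "x \<in> sumzero" "x \<noteq> 0" using sumzero_ex assms(1) by force
    moreover have "0 \<in> sumzero" by (simp add: sumzero_def)
    ultimately show "linearly_unstable \<alpha> c"
      unfolding linearly_unstable_def using C1 D eig_ex[OF E] by force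
  qed
  ultimately show ?thesis by (simp add: n_def)
qed

end
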